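(* For each integer $l \ge 2$ let $f_l(z) = \sum_{n\ge1}\gamma_l(n)q^n$ be a weight-$l$ CM newform (in $S_l(\Gamma_0(32))$ if $l$ is even, in $S_l(\Gamma_0(4),(\frac{-4}{\cdot}))$ if $l \equiv 1 \pmod 4$, in $S_l(\Gamma_0(16),(\frac{-4}{\cdot}))$ if $l \equiv 3 \pmod 4$) whose coefficients at odd primes $p$ are $$\gamma_l(p) = \begin{cases} (-1)^{\frac{(x+y-1)(l-1)}{2}}\left[(x+iy)^{l-1} + (x-iy)^{l-1}\right], & p \equiv 1 \pmod 4,\ p = x^2+y^2,\ x \text{ odd},\\ 0, & p \equiv 3 \pmod 4.\end{cases}$$ Let $k \ge 2$ be an integer. Then for every odd prime $p$ and every integer $m \geq 1$, $$\gamma_k(p)^m = \sum_{t=0}^{\lfloor \frac{m-1}{2}\rfloor}\binom{m}{t} p^{t(k-1)}\gamma_{(m-2t)(k-1)+1}(p) + \begin{cases}\binom{m}{m/2} p^{\frac m2 (k-1)}, & p \equiv 1 \pmod 4 \text{ and } m \text{ even},\\ 0, & \text{otherwise}.\end{cases}$$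
   Context: $q = e^{2\pi i z}$; $(\frac{-4}{\cdot})$ is the nontrivial Dirichlet character modulo $4$. A CM newform is a newform $\sum\gamma(n)q^n$ with $\gamma(p) = \psi(p)\gamma(p)$ for all primes $p$ in a set of density one, for some nontrivial real Dirichlet character $\psi$. (Such newforms $f_l$ exist for every $l \ge 2$.) *)

theory Defs
  imports Complex_Main "HOL-Computational_Algebra.Primes"
begin

text \<open>For p = 1 mod 4 we choose a
  representation p = x^2 + y^2 with x odd (the value does not depend on the
  choice); for p = 3 mod 4 the coefficient is 0.\<close>

definition cm_coeff :: "nat \<Rightarrow> nat \<Rightarrow> complex" where
  "cm_coeff l p =
     (if p mod 4 = 1 then
        (let (x, y) = (SOME (x, y). odd x \<and> int p = x^2 + y^2) :: int \<times> int
         in (if even (((x + y - 1) div 2) * (int l - 1)) then 1 else -1) *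
              ((of_int x + \<i> * of_int y) ^ (l - 1) + (of_int x - \<i> * of_int y) ^ (l - 1)))
      else 0)"

end

theory Submission
  imports Defs "HOL-Number_Theory.Number_Theory"
begin

lemma core:
  fixes A B :: "'a::comm_ring_1" and m :: nat
  assumes "m \<ge> 1"
  shows "(A+B)^m = (\<Sum>t = 0..(m-1) div 2. of_nat (m choose t) * (A*B)^t * (A^(m-2*t) + B^(m-2*t)))
     + (if even m then of_nat (m choose (m div 2)) * (A*B)^(m div 2) else 0)"
proof -
  define h where "h = (m-1) div 2"
  define g where "g = (\<lambda>j. of_nat (m choose j) * A^j * B^(m-j) :: 'a)"
  define L where "L = {0..h}"
  define H where "H = (\<lambda>t. m-t) ` L"
  define M where "M = (if even m then {m div 2} else {})"
  have dec: "{..m} = L \<union> H \<union> M"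
  proof (intro equalityI subsetI)
    fix j assume "j \<in> {..m}"
    hence jm: "j \<le> m" by simp
    show "j \<in> L \<union> H \<union> M"
    proof (cases "j \<le> h")
      case True then show ?thesis by (simp add: L_def)
    next
      case False
      show ?thesis
      proof (cases "2*j = m")
        case True then show ?thesis by (auto simp: M_def)
      next
        case False
        with \<open>\<not> j \<le> h\<close> jm have "m - j \<le> h" "j = m - (m - j)" unfolding h_def by presburger+
        then have "j \<in> H" unfolding H_def L_def by (intro image_eqI[of j _ "m-j"]) auto
        then show ?thesis by blast
      qed
    qed
  next
    fix j assume "j \<in> L \<union> H \<union> M"
    then show "j \<in> {..m}" using assms by (auto simp: L_def H_def M_def h_def split: if_splits)
  qed
  have d1: "L \<inter> H = {}" unfolding L_def H_def h_def using assms by auto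
  have d2: "(L \<union> H) \<inter> M = {}" unfolding L_def H_def M_def h_def using assms by auto
  have inj: "inj_on (\<lambda>t. m-t) L" unfolding L_def h_def inj_on_def using assms by auto
  have "(A+B)^m = sum g {..m}" unfolding g_def by (simp add: binomial_ring)
  also have "\<dots> = sum g L + sum g H + sum g M"
    unfolding dec using d1 d2
    by (simp add: sum.union_disjoint L_def H_def M_def)
  also have "sum g H = sum (\<lambda>t. g (m-t)) L" unfolding H_def using inj by (simp add: sum.reindex)
  also have "sum g L + sum (\<lambda>t. g (m-t)) L = (\<Sum>t\<in>L. of_nat (m choose t) * (A*B)^t * (A^(m-2*t) + B^(m-2*t)))"
    unfolding sum.distrib[symmetric]
  proof (rule sum.cong[OF refl])
    fix t assume "t \<in> L"
    hence t: "2*t \<le> m" unfolding L_def h_def by auto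
    have e1: "m - t = t + (m - 2*t)" using t by simp
    have e2: "m - (m-t) = t" using t by simp
    have "g t = of_nat (m choose t) * (A*B)^t * B^(m-2*t)"
      unfolding g_def e1 power_add power_mult_distrib by (simp add: ac_simps)
    moreover have "g (m-t) = of_nat (m choose t) * (A*B)^t * A^(m-2*t)"
    proof -
      have c: "m choose (m-t) = m choose t" using t binomial_symmetric[of t m] by simp
      have "g (m-t) = of_nat (m choose t) * A^(m-t) * B^t" unfolding g_def e2 c ..
      also have "\<dots> = of_nat (m choose t) * (A*B)^t * A^(m-2*t)"
        unfolding e1 power_add power_mult_distrib by (simp add: ac_simps)
      finally show ?thesis .
    qed
    ultimately show "g t + g (m-t) = of_nat (m choose t) * (A*B)^t * (A^(m-2*t) + B^(m-2*t))"
      by (simp add: algebra_simps)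
  qed
  also have "sum g M = (if even m then of_nat (m choose (m div 2)) * (A*B)^(m div 2) else 0)"
  proof (cases "even m")
    case True
    then have "m - m div 2 = m div 2" by presburger
    then show ?thesis using True by (simp add: M_def g_def power_mult_distrib ac_simps)
  qed (simp add: M_def)
  finally show ?thesis unfolding L_def h_def .
qed

lemma sqrt_m1:
  fixes p :: nat
  assumes "prime p" "p mod 4 = 1"
  shows "\<exists>a::int. [a^2 = -1] (mod int p)"
proof -
  have p2: "2 < int p" using assms prime_ge_2_nat[of p] by presburger
  have pr: "prime (int p)" using assms by simp
  have ev: "even ((int p - 1) div 2)" using assms by presburger
  have p2': "2 < p" using p2 by simp
  have ev': "even ((p - 1) div 2)" using assms by presburger
  have "[Legendre (-1) (int p) = (-1) ^ ((p - 1) div 2)] (mod int p)"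
    using euler_criterion[OF assms(1) p2', of "-1"] by simp
  hence c: "[Legendre (-1) (int p) = 1] (mod int p)" using ev' by simp
  have "Legendre (-1) (int p) = 1"
  proof (rule ccontr)
    assume "Legendre (-1) (int p) \<noteq> 1"
    then have "Legendre (-1) (int p) = 0 \<or> Legendre (-1) (int p) = -1" unfolding Legendre_def by (auto split: if_splits)
    then have "int p dvd 1 \<or> int p dvd 2" using c unfolding cong_iff_dvd_diff
      by (auto simp: dvd_minus_iff)
    then show False using p2 by (auto dest: zdvd_imp_le)
  qed
  then have "QuadRes (int p) (-1)" unfolding Legendre_def by (auto split: if_splits)
  then show ?thesis unfolding QuadRes_def by auto
qed
lemma two_sq:
  fixes p :: nat
  assumes "prime p" "p mod 4 = 1"
  shows "\<exists>x y::int. odd x \<and> int p = x^2 + y^2"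
proof -
  obtain a :: int where a: "[a^2 = -1] (mod int p)" using sqrt_m1[OF assms] by blast
  define P where "P = int p"
  have P1: "P > 1" using assms prime_gt_1_nat unfolding P_def by simp
  define s where "s = \<lfloor>sqrt (real_of_int P)\<rfloor>"
  have s0: "s \<ge> 0" unfolding s_def using P1 by simp
  have "real_of_int s \<le> sqrt P" unfolding s_def by simp
  hence "(real_of_int s)^2 \<le> (sqrt P)^2" using s0 by (intro power_mono) auto
  hence "(real_of_int s)^2 \<le> P" using P1 by simp
  hence sle: "s^2 \<le> P" by (metis of_int_le_iff of_int_power)
  have "sqrt P < real_of_int s + 1" unfolding s_def by linarith
  hence "(sqrt P)^2 < (real_of_int s + 1)^2" using P1 by (intro power_strict_mono) auto
  hence "P < (real_of_int s + 1)^2" using P1 by simp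
  hence sgt: "P < (s+1)^2" by (metis of_int_less_iff of_int_power of_int_add of_int_1)
  have sne: "s^2 \<noteq> P"
  proof
    assume h: "s^2 = P"
    have "prime P" using assms unfolding P_def by simp
    have "s dvd P" using h by (metis dvd_triv_right power2_eq_square)
    hence "s = 1 \<or> s = P" using \<open>prime P\<close> s0 unfolding prime_int_iff by blast
    then show False using h P1 by (auto simp: power2_eq_square)
  qed
  have slt: "s^2 < P" using sle sne by simp
  define D where "D = {0..s} \<times> {0..s}"
  define f where "f = (\<lambda>(u,v). (u - a*v) mod P)"
  have cD: "card D = nat ((s+1)^2)" unfolding D_def using s0
    by (simp add: power2_eq_square nat_mult_distrib)
  have "\<not> inj_on f D"
  proof
    assume inj: "inj_on f D"
    have "f ` D \<subseteq> {0..<P}" unfolding f_def using P1 by auto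
    hence "card D \<le> card {0..<P}" using card_inj_on_le[OF inj, of "{0..<P}"] by simp
    then show False using cD sgt P1 by simp
  qed
  then obtain u1 v1 u2 v2 where uv: "(u1,v1) \<in> D" "(u2,v2) \<in> D" "(u1,v1) \<noteq> (u2,v2)"
    "f (u1,v1) = f (u2,v2)" unfolding inj_on_def by auto
  define x where "x = u1 - u2"
  define y where "y = v1 - v2"
  have xy0: "x \<noteq> 0 \<or> y \<noteq> 0" using uv(3) unfolding x_def y_def by auto
  have bx: "\<bar>x\<bar> \<le> s" "\<bar>y\<bar> \<le> s" using uv(1,2) unfolding x_def y_def D_def by auto
  have "[u1 - a*v1 = u2 - a*v2] (mod P)" using uv(4) unfolding f_def cong_def by simp
  hence "P dvd (u1 - a*v1) - (u2 - a*v2)" by (simp add: cong_iff_dvd_diff)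
  hence "P dvd x - a*y" unfolding x_def y_def by (simp add: algebra_simps)
  hence "[x = a*y] (mod P)" by (simp add: cong_iff_dvd_diff)
  hence "[x^2 = a^2 * y^2] (mod P)" by (metis cong_pow power_mult_distrib)
  moreover have "[a^2*y^2 = -1 * y^2] (mod P)" using a unfolding P_def by (intro cong_mult) auto
  ultimately have "[x^2 = - (y^2)] (mod P)" using cong_trans by fastforce
  hence dv: "P dvd x^2 + y^2" unfolding cong_iff_dvd_diff by simp
  have x2: "x^2 \<le> s^2" "y^2 \<le> s^2" using bx s0 by (metis abs_le_square_iff abs_of_nonneg)+
  have pos: "x^2 + y^2 > 0" using xy0 by (simp add: sum_power2_gt_zero_iff)
  have lt: "x^2 + y^2 < 2*P" using x2 slt by linarith
  obtain c where c: "x^2 + y^2 = P * c" using dv by blast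
  have "c > 0" using c pos P1 by (simp add: zero_less_mult_iff)
  moreover have "P * c < P * 2" using c lt by (simp add: mult.commute)
  hence "c < 2" using P1 by simp
  ultimately have "c = 1" by simp
  hence eq: "P = x^2 + y^2" using c by simp
  have "odd x \<or> odd y"
  proof (rule ccontr)
    assume "\<not> (odd x \<or> odd y)"
    then have "4 dvd x^2 + y^2" by (auto simp: power2_eq_square elim!: evenE)
    then show False using eq assms unfolding P_def by presburger
  qed
  then show ?thesis using eq unfolding P_def by (metis add.commute)
qed

lemma cm_coeff_1mod4:
  assumes "p mod 4 = 1" and "odd x" and "int p = x^2 + y^2"
    and xy: "(SOME (x, y). odd x \<and> int p = x^2 + y^2) = (x, y)" and "l \<ge> 1"
  shows "cm_coeff l p = (if even ((x + y - 1) div 2) then 1 else -1) ^ (l - 1) *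
     ((of_int x + \<i> * of_int y) ^ (l - 1) + (of_int x - \<i> * of_int y) ^ (l - 1))"
proof -
  have il: "int l - 1 = int (l - 1)" using assms(5) by simp
  have s: "(if even (((x + y - 1) div 2) * (int l - 1)) then 1 else -1) =
      ((if even ((x + y - 1) div 2) then 1 else -1) ^ (l - 1) :: complex)"
    unfolding il by (auto simp: even_mult_iff)
  show ?thesis unfolding cm_coeff_def using assms(1) xy s by (simp add: Let_def)
qed

theorem corollary4p2:
  fixes k p m :: nat
  assumes "k \<ge> 2" and "prime p" and "odd p" and "m \<ge> 1"
  shows "cm_coeff k p ^ m =
    (\<Sum>t = 0..(m - 1) div 2. of_nat (m choose t) * of_nat p ^ (t * (k - 1))
        * cm_coeff ((m - 2 * t) * (k - 1) + 1) p)
    + (if p mod 4 = 1 \<and> even m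
       then of_nat (m choose (m div 2)) * of_nat p ^ ((m div 2) * (k - 1)) else 0)"
proof (cases "p mod 4 = 1")
  case False
  then have z: "cm_coeff l p = 0" for l unfolding cm_coeff_def by simp
  show ?thesis using False assms(4) by (simp add: z)
next
  case True
  have ex: "\<exists>z. (\<lambda>(x, y). odd x \<and> int p = x^2 + y^2) z"
    using two_sq[OF assms(2) True] by auto
  obtain x y where xy: "(SOME (x, y). odd x \<and> int p = x^2 + y^2) = (x, y)"
    by (cases "(SOME (x, y). odd x \<and> int p = x^2 + y^2) :: int \<times> int") blast
  from someI_ex[OF ex] have xyp: "odd x" "int p = x^2 + y^2" unfolding xy by auto
  define e :: complex where "e = (if even ((x + y - 1) div 2) then 1 else -1)"
  define a where "a = of_int x + \<i> * of_int y"
  define b where "b = of_int x - \<i> * of_int y"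
  define n where "n = k - 1"
  have e2: "e^2 = 1" unfolding e_def by simp
  have ab: "a * b = of_nat p"
  proof -
    have "a * b = of_int (x^2 + y^2)" unfolding a_def b_def
      by (simp add: algebra_simps power2_eq_square)
    also have "\<dots> = of_nat p" using xyp(2) by (metis of_int_of_nat_eq)
    finally show ?thesis .
  qed
  have cc: "cm_coeff l p = e^(l-1) * (a^(l-1) + b^(l-1))" if "l \<ge> 1" for l
    using cm_coeff_1mod4[OF True xyp xy that] unfolding e_def a_def b_def by simp
  have ep: "e^(j + 2*i) = e^j" for j i
    by (simp add: power_add power_mult e2)
  have "cm_coeff k p ^ m = e^(n*m) * (a^n + b^n)^m"
    using cc[of k] assms(1) unfolding n_def by (simp add: power_mult_distrib power_mult)
  also have "(a^n + b^n)^m = (\<Sum>t = 0..(m-1) div 2. of_nat (m choose t) * (a^n*b^n)^t * ((a^n)^(m-2*t) + (b^n)^(m-2*t)))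
     + (if even m then of_nat (m choose (m div 2)) * (a^n*b^n)^(m div 2) else 0)"
    by (rule core[OF assms(4)])
  also have "e^(n*m) * \<dots> = (\<Sum>t = 0..(m - 1) div 2. of_nat (m choose t) * of_nat p ^ (t * (k - 1))
        * cm_coeff ((m - 2 * t) * (k - 1) + 1) p)
    + (if p mod 4 = 1 \<and> even m
       then of_nat (m choose (m div 2)) * of_nat p ^ ((m div 2) * (k - 1)) else 0)"
  proof -
    have abn: "a^n * b^n = of_nat p ^ n" by (simp add: ab power_mult_distrib[symmetric])
    have S: "e^(n*m) * (of_nat (m choose t) * (a^n*b^n)^t * ((a^n)^(m-2*t) + (b^n)^(m-2*t)))
       = of_nat (m choose t) * of_nat p ^ (t * (k - 1)) * cm_coeff ((m - 2 * t) * (k - 1) + 1) p"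
      if "t \<in> {0..(m-1) div 2}" for t
    proof -
      from that have t: "2*t \<le> m" by auto
      have "n*m = (m-2*t)*n + 2*(n*t)" using t by (simp add: algebra_simps diff_mult_distrib)
      hence en: "e^(n*m) = e^((m-2*t)*n)" using ep by metis
      have "cm_coeff ((m - 2 * t) * (k - 1) + 1) p = e^((m-2*t)*n) * (a^((m-2*t)*n) + b^((m-2*t)*n))"
        using cc[of "(m - 2 * t) * (k - 1) + 1"] unfolding n_def by simp
      also have "\<dots> = e^((m-2*t)*n) * ((a^n)^(m-2*t) + (b^n)^(m-2*t))"
        by (simp add: power_mult[symmetric] mult.commute)
      finally have cm: "cm_coeff ((m - 2 * t) * (k - 1) + 1) p = e^((m-2*t)*n) * ((a^n)^(m-2*t) + (b^n)^(m-2*t))" .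
      have pk: "(of_nat p :: complex) ^ (t * (k - 1)) = (of_nat p ^ n) ^ t"
        unfolding n_def by (simp add: power_mult[symmetric] mult.commute)
      show ?thesis unfolding cm en abn pk by (simp add: ac_simps)
    qed
    have M: "e^(n*m) * (if even m then of_nat (m choose (m div 2)) * (a^n*b^n)^(m div 2) else 0)
      = (if p mod 4 = 1 \<and> even m
       then of_nat (m choose (m div 2)) * of_nat p ^ ((m div 2) * (k - 1)) else 0)"
    proof (cases "even m")
      case True
      then obtain q where q: "m = 2*q" by blast
      have "e^(n*m) = 1" unfolding q using ep[of 0 "n*q"] by (simp add: ac_simps)
      moreover have pk: "(of_nat p :: complex) ^ ((m div 2) * (k - 1)) = (of_nat p ^ n) ^ (m div 2)"
        unfolding n_def by (simp add: power_mult[symmetric] mult.commute)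
      ultimately show ?thesis using True \<open>p mod 4 = 1\<close> by (simp only: abn pk) simp
    qed simp
    show ?thesis unfolding distrib_left[of "e^(n*m)" "sum _ _"] sum_distrib_left M by (rule arg_cong2[where f="(+)"], rule sum.cong[OF refl], erule S, rule refl)
  qed
  finally show ?thesis .
qed

end
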